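(* Let $G$ be a classical subgroup of $\mathrm{GL}(N+1,\mathbb{C})$ (for instance $G=\mathrm{SL}(N+1,\mathbb{C})$), let $V$ and $W$ be finite-dimensional rational complex representations of $G$ equipped with Hermitian norms $\|\cdot\|$, and let $v\in V\setminus\{0\}$, $w\in W\setminus\{0\}$. Define $p_{v,w}(\sigma)=\log\|\sigma(w)\|^2-\log\|\sigma(v)\|^2$ for $\sigma\in G$. Then $$\inf_{\sigma\in G}p_{v,w}(\sigma)=\log\tan^2 d\big(\overline{G[v,w]},\,\overline{G[v,0]}\big),$$ where $d$ is the distance function of the Fubini–Study metric on $\mathbb{P}(V\oplus W)$ and $d(A,B)$ denotes the distance between the sets $A$ and $B$.
   Context: The Hermitian norms on $V$ and $W$ induce a Hermitian inner product $(\cdot,\cdot)$ on $V\oplus W$ (orthogonal direct sum), and the Fubini–Study distance on $\mathbb{P}(V\oplus W)$ is given by $\cos d([u],[u'])=|(u,u')|/(\|u\|\,\|u'\|)$. Here $[v,w]$ denotes the point of $\mathbb{P}(V\oplus W)$ determined by $(v,w)$, $[v,0]$ the point determined by $(v,0)$, and $\overline{G[v,w]}$, $\overline{G[v,0]}$ are the closures of their $G$-orbits in $\mathbb{P}(V\oplus W)$. *)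

theory Defs
  imports "HOL-Analysis.Analysis"
begin

text \<open>Matrices are complex^'k^'k with CARD('k) = N+1.\<close>

definition GLc :: "(complex^'k^'k) set" where
  "GLc = {A. det A \<noteq> 0}"

definition SLc :: "(complex^'k^'k) set" where
  "SLc = {A. det A = 1}"

definition SOc :: "(complex^'k^'k) set" where
  "SOc = {A. transpose A ** A = mat 1 \<and> det A = 1}"

text \<open>Symplectic group of a nondegenerate alternating form J (all such are conjugate
  to the standard one).\<close>
definition Spc :: "complex^'k^'k \<Rightarrow> (complex^'k^'k) set" where
  "Spc J = {A. transpose A ** J ** A = J}"

definition classical_subgroup :: "(complex^'k^'k) set \<Rightarrow> bool" where
  "classical_subgroup G \<longleftrightarrow>
     G = GLc \<or> G = SLc \<or> G = SOc \<or>
     (\<exists>J. transpose J = - J \<and> det J \<noteq> 0 \<and> G = Spc J)"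

inductive_set poly_fun :: "(complex^'k^'k \<Rightarrow> complex) set" where
  const: "(\<lambda>A. c) \<in> poly_fun"
| entry: "(\<lambda>A. A $ i $ j) \<in> poly_fun"
| add: "f \<in> poly_fun \<Longrightarrow> g \<in> poly_fun \<Longrightarrow> (\<lambda>A. f A + g A) \<in> poly_fun"
| mult: "f \<in> poly_fun \<Longrightarrow> g \<in> poly_fun \<Longrightarrow> (\<lambda>A. f A * g A) \<in> poly_fun"

text \<open>A rational representation of G on complex^'n: a group homomorphism G -> GL(V)
  whose matrix entries are regular functions, i.e. polynomials in the entries of g
  divided by a power of det g.\<close>
definition rational_rep ::
  "(complex^'k^'k) set \<Rightarrow> (complex^'k^'k \<Rightarrow> complex^'n^'n) \<Rightarrow> bool" where
  "rational_rep G \<rho> \<longleftrightarrow>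
     \<rho> (mat 1) = mat 1 \<and>
     (\<forall>g\<in>G. \<forall>h\<in>G. \<rho> (g ** h) = \<rho> g ** \<rho> h) \<and>
     (\<forall>i j. \<exists>p\<in>poly_fun. \<exists>m::nat. \<forall>g\<in>G. \<rho> g $ i $ j = p g / (det g) ^ m)"

definition herm :: "complex^'n^'n \<Rightarrow> complex^'n \<Rightarrow> complex^'n \<Rightarrow> complex" where
  "herm H x y = (\<Sum>i\<in>UNIV. \<Sum>j\<in>UNIV. cnj (x $ i) * H $ i $ j * y $ j)"

definition pos_def_hermitian :: "complex^'n^'n \<Rightarrow> bool" where
  "pos_def_hermitian H \<longleftrightarrow>
     (\<forall>i j. H $ i $ j = cnj (H $ j $ i)) \<and> (\<forall>x. x \<noteq> 0 \<longrightarrow> Re (herm H x x) > 0)"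

definition hnormsq :: "complex^'n^'n \<Rightarrow> complex^'n \<Rightarrow> real" where
  "hnormsq H x = Re (herm H x x)"

text \<open>Points of P(V+W) are represented by nonzero vectors (v,w).  The inner product on
  the orthogonal direct sum.\<close>
definition sum_ip :: "complex^'n^'n \<Rightarrow> complex^'m^'m \<Rightarrow>
    ((complex^'n) \<times> (complex^'m)) \<Rightarrow> ((complex^'n) \<times> (complex^'m)) \<Rightarrow> complex" where
  "sum_ip HV HW u u' = herm HV (fst u) (fst u') + herm HW (snd u) (snd u')"

definition fs_dist :: "complex^'n^'n \<Rightarrow> complex^'m^'m \<Rightarrow>
    ((complex^'n) \<times> (complex^'m)) \<Rightarrow> ((complex^'n) \<times> (complex^'m)) \<Rightarrow> real" where
  "fs_dist HV HW u u' =
     arccos (cmod (sum_ip HV HW u u') /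
             (sqrt (Re (sum_ip HV HW u u)) * sqrt (Re (sum_ip HV HW u' u'))))"

text \<open>Closure in P(V+W) (w.r.t. the Fubini--Study metric, which induces the usual
  topology) of a set of nonzero representatives.\<close>
definition proj_closure :: "complex^'n^'n \<Rightarrow> complex^'m^'m \<Rightarrow>
    ((complex^'n) \<times> (complex^'m)) set \<Rightarrow> ((complex^'n) \<times> (complex^'m)) set" where
  "proj_closure HV HW S =
     {u. u \<noteq> 0 \<and> (\<forall>e>0. \<exists>a\<in>S. fs_dist HV HW u a < e)}"

definition fs_setdist :: "complex^'n^'n \<Rightarrow> complex^'m^'m \<Rightarrow>
    ((complex^'n) \<times> (complex^'m)) set \<Rightarrow> ((complex^'n) \<times> (complex^'m)) set \<Rightarrow> real" where
  "fs_setdist HV HW A B = Inf {fs_dist HV HW a b | a b. a \<in> A \<and> b \<in> B}"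

definition orbit_pair :: "(complex^'k^'k) set \<Rightarrow> (complex^'k^'k \<Rightarrow> complex^'n^'n) \<Rightarrow>
    (complex^'k^'k \<Rightarrow> complex^'m^'m) \<Rightarrow> complex^'n \<Rightarrow> complex^'m \<Rightarrow>
    ((complex^'n) \<times> (complex^'m)) set" where
  "orbit_pair G \<rho> \<tau> v w = {(\<rho> \<sigma> *v v, \<tau> \<sigma> *v w) | \<sigma>. \<sigma> \<in> G}"

definition elog :: "real \<Rightarrow> ereal" where
  "elog x = (if x = 0 then -\<infinity> else ereal (ln x))"

end

theory Submission
  imports Defs
begin



lemma herm_add_left: "herm H (x + y) z = herm H x z + herm H y z"
  by (simp add: herm_def algebra_simps sum.distrib)
lemma herm_add_right: "herm H x (y + z) = herm H x y + herm H x z"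
  by (simp add: herm_def algebra_simps sum.distrib)
lemma herm_diff_left: "herm H (x - y) z = herm H x z - herm H y z"
  by (simp add: herm_def algebra_simps sum_subtractf)
lemma herm_diff_right: "herm H x (y - z) = herm H x y - herm H x z"
  by (simp add: herm_def algebra_simps sum_subtractf)
lemma herm_scale_left: "herm H (c *s x) y = cnj c * herm H x y"
  by (simp add: herm_def sum_distrib_left algebra_simps)
lemma herm_scale_right: "herm H x (c *s y) = c * herm H x y"
  by (simp add: herm_def sum_distrib_left algebra_simps)
lemma herm_zero_left[simp]: "herm H 0 y = 0"
  by (simp add: herm_def)
lemma herm_zero_right[simp]: "herm H x 0 = 0"
  by (simp add: herm_def)

lemma herm_sym:
  assumes "pos_def_hermitian H"
  shows "herm H y x = cnj (herm H x y)"
proof -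
  have h: "\<And>i j. H $ i $ j = cnj (H $ j $ i)" using assms unfolding pos_def_hermitian_def by blast
  have "cnj (herm H x y) = (\<Sum>i\<in>UNIV. \<Sum>j\<in>UNIV. x $ i * cnj (H $ i $ j) * cnj (y $ j))"
    unfolding herm_def by (simp only: cnj_sum complex_cnj_mult complex_cnj_cnj)
  also have "\<dots> = (\<Sum>i\<in>UNIV. \<Sum>j\<in>UNIV. cnj (y $ j) * H $ j $ i * x $ i)"
  proof (intro sum.cong refl)
    fix i j
    have e: "cnj (H $ i $ j) = H $ j $ i" using h[of j i] by (metis complex_cnj_cnj)
    show "x $ i * cnj (H $ i $ j) * cnj (y $ j) = cnj (y $ j) * H $ j $ i * x $ i"
      unfolding e by (simp only: mult.commute mult.left_commute)
  qed
  also have "\<dots> = herm H y x"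
    unfolding herm_def by (rule sum.swap)
  finally show ?thesis by (rule sym)
qed

lemma herm_real:
  assumes "pos_def_hermitian H"
  shows "herm H x x = of_real (hnormsq H x)"
proof -
  have "herm H x x = cnj (herm H x x)" using herm_sym[OF assms] by metis
  hence "Im (herm H x x) = 0" by (metis cnj.sel(2) neg_equal_zero)
  thus ?thesis unfolding hnormsq_def by (simp add: complex_eq_iff)
qed

lemma hnormsq_nonneg:
  assumes "pos_def_hermitian H"
  shows "0 \<le> hnormsq H x"
  using assms unfolding pos_def_hermitian_def hnormsq_def
  by (cases "x = 0") (auto intro: less_imp_le)

lemma hnormsq_pos:
  assumes "pos_def_hermitian H" "x \<noteq> 0"
  shows "0 < hnormsq H x"
  using assms unfolding pos_def_hermitian_def hnormsq_def by auto

lemma hnormsq_zero_iff: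
  assumes "pos_def_hermitian H"
  shows "hnormsq H x = 0 \<longleftrightarrow> x = 0"
proof
  assume "hnormsq H x = 0" thus "x = 0" using hnormsq_pos[OF assms, of x] by (cases "x = 0") auto
qed (simp add: hnormsq_def)

lemma hnormsq_diff:
  assumes "pos_def_hermitian H"
  shows "hnormsq H (x - z) = hnormsq H x - 2 * Re (herm H x z) + hnormsq H z"
proof -
  have "herm H (x - z) (x - z) = herm H x x - herm H x z - herm H z x + herm H z z"
    by (simp add: herm_diff_left herm_diff_right)
  also have "herm H z x = cnj (herm H x z)" by (rule herm_sym[OF assms])
  finally show ?thesis unfolding hnormsq_def by simp
qed

lemma hnormsq_scale:
  "hnormsq H (c *s x) = (cmod c)^2 * hnormsq H x"
proof -
  have "herm H (c *s x) (c *s x) = (cnj c * c) * herm H x x"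
    by (simp add: herm_scale_left herm_scale_right)
  also have "cnj c * c = of_real ((cmod c)^2)" by (metis complex_norm_square mult.commute of_real_power)
  finally show ?thesis unfolding hnormsq_def by simp
qed

lemma herm_cs:
  assumes H: "pos_def_hermitian H"
  shows "(cmod (herm H x y))^2 \<le> hnormsq H x * hnormsq H y"
proof (cases "y = 0")
  case True thus ?thesis by (simp add: hnormsq_def)
next
  case False
  define hy where "hy = hnormsq H y"
  have hy: "hy > 0" using hnormsq_pos[OF H False] by (simp add: hy_def)
  define h where "h = herm H x y"
  define t where "t = cnj h / of_real hy"
  define z where "z = x - t *s y"
  have hyx: "herm H y x = cnj h" using herm_sym[OF H] h_def by metis
  have hyy: "herm H y y = of_real hy" using herm_real[OF H] hy_def by metis
  have "herm H z z = herm H x x - t * h - cnj t * cnj h + cnj t * t * of_real hy"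
    unfolding z_def
    by (simp add: herm_diff_left herm_diff_right herm_scale_left herm_scale_right hyx hyy h_def[symmetric] algebra_simps)
  also have "t * h = of_real ((cmod h)^2 / hy)"
    unfolding t_def using complex_norm_square[of h] by (simp add: mult.commute)
  also have "cnj t * cnj h = of_real ((cmod h)^2 / hy)"
    unfolding t_def using complex_norm_square[of h] by simp
  also have "cnj t * t * of_real hy = of_real ((cmod h)^2 / hy)"
    unfolding t_def using complex_norm_square[of h] hy by (simp add: power2_eq_square)
  finally have "hnormsq H z = hnormsq H x - (cmod h)^2 / hy"
    unfolding hnormsq_def by simp
  with hnormsq_nonneg[OF H, of z] have "(cmod h)^2 / hy \<le> hnormsq H x" by simp
  with hy have "(cmod h)^2 \<le> hnormsq H x * hy" by (simp add: pos_divide_le_eq)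
  thus ?thesis by (simp add: h_def hy_def)
qed

lemma herm_cs':
  assumes H: "pos_def_hermitian H"
  shows "cmod (herm H x y) \<le> sqrt (hnormsq H x) * sqrt (hnormsq H y)"
proof -
  have "sqrt ((cmod (herm H x y))^2) \<le> sqrt (hnormsq H x * hnormsq H y)"
    using herm_cs[OF H] real_sqrt_le_mono by blast
  thus ?thesis by (simp add: real_sqrt_mult)
qed

lemma cs2:
  fixes a b c d :: real
  assumes "0 \<le> a" "0 \<le> b" "0 \<le> c" "0 \<le> d"
  shows "a * b + c * d \<le> sqrt (a^2 + c^2) * sqrt (b^2 + d^2)"
proof -
  have "(a * b + c * d)^2 \<le> (a^2 + c^2) * (b^2 + d^2)"
    using sum_squares_ge_zero[of "a*d - b*c" 0] by (simp add: power2_eq_square algebra_simps)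
  hence "sqrt ((a * b + c * d)^2) \<le> sqrt ((a^2 + c^2) * (b^2 + d^2))"
    using real_sqrt_le_mono by blast
  thus ?thesis using assms by (simp add: real_sqrt_mult)
qed

definition NN :: "complex^'n^'n \<Rightarrow> complex^'m^'m \<Rightarrow> ((complex^'n) \<times> (complex^'m)) \<Rightarrow> real" where
  "NN HV HW u = hnormsq HV (fst u) + hnormsq HW (snd u)"

lemma Re_sum_ip: "Re (sum_ip HV HW u u) = NN HV HW u"
  by (simp add: sum_ip_def NN_def hnormsq_def)

lemma NN_nonneg:
  assumes "pos_def_hermitian HV" "pos_def_hermitian HW"
  shows "0 \<le> NN HV HW u"
  using hnormsq_nonneg[OF assms(1)] hnormsq_nonneg[OF assms(2)] by (simp add: NN_def add_nonneg_nonneg)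

lemma NN_pos:
  assumes "pos_def_hermitian HV" "pos_def_hermitian HW" "u \<noteq> 0"
  shows "0 < NN HV HW u"
proof -
  have "fst u \<noteq> 0 \<or> snd u \<noteq> 0" using assms(3) by (cases u) (auto simp: zero_prod_def)
  thus ?thesis
    using hnormsq_nonneg[OF assms(1), of "fst u"] hnormsq_nonneg[OF assms(2), of "snd u"]
      hnormsq_pos[OF assms(1), of "fst u"] hnormsq_pos[OF assms(2), of "snd u"]
    unfolding NN_def by linarith
qed

lemma sum_ip_cs:
  assumes HV: "pos_def_hermitian HV" and HW: "pos_def_hermitian HW"
  shows "cmod (sum_ip HV HW u a) \<le> sqrt (NN HV HW u) * sqrt (NN HV HW a)"
proof -
  let ?a = "sqrt (hnormsq HV (fst u))" and ?b = "sqrt (hnormsq HV (fst a))"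
  let ?c = "sqrt (hnormsq HW (snd u))" and ?d = "sqrt (hnormsq HW (snd a))"
  have "cmod (sum_ip HV HW u a) \<le> cmod (herm HV (fst u) (fst a)) + cmod (herm HW (snd u) (snd a))"
    unfolding sum_ip_def by (rule norm_triangle_ineq)
  also have "\<dots> \<le> ?a * ?b + ?c * ?d"
    using herm_cs'[OF HV] herm_cs'[OF HW] by (rule add_mono)
  also have "\<dots> \<le> sqrt (?a^2 + ?c^2) * sqrt (?b^2 + ?d^2)"
    by (rule cs2) (auto simp: hnormsq_nonneg[OF HV] hnormsq_nonneg[OF HW])
  also have "\<dots> = sqrt (NN HV HW u) * sqrt (NN HV HW a)"
    using hnormsq_nonneg[OF HV] hnormsq_nonneg[OF HW] by (simp add: NN_def)
  finally show ?thesis .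
qed




lemma closure_quad:
  fixes \<alpha> \<beta> :: real
  assumes HV: "pos_def_hermitian HV" and HW: "pos_def_hermitian HW"
    and u: "u \<in> proj_closure HV HW S"
    and S: "\<And>a. a \<in> S \<Longrightarrow> a \<noteq> 0 \<and> 0 \<le> \<alpha> * hnormsq HV (fst a) + \<beta> * hnormsq HW (snd a)"
  shows "0 \<le> \<alpha> * hnormsq HV (fst u) + \<beta> * hnormsq HW (snd u)"
proof -
  define Q where "Q z = \<alpha> * hnormsq HV (fst z) + \<beta> * hnormsq HW (snd z)" for z
  define K where "K = \<bar>\<alpha>\<bar> + \<bar>\<beta>\<bar>"
  define Nu where "Nu = NN HV HW u"
  have K0: "0 \<le> K" by (simp add: K_def)
  have u0: "u \<noteq> 0" using u by (simp add: proj_closure_def)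
  have Nu: "0 < Nu" using NN_pos[OF HV HW u0] by (simp add: Nu_def)
  have hxu: "0 \<le> hnormsq HV (fst u)" "hnormsq HV (fst u) \<le> Nu"
    using hnormsq_nonneg[OF HV] hnormsq_nonneg[OF HW] by (auto simp: Nu_def NN_def)
  have hyu: "0 \<le> hnormsq HW (snd u)" "hnormsq HW (snd u) \<le> Nu"
    using hnormsq_nonneg[OF HV] hnormsq_nonneg[OF HW] by (auto simp: Nu_def NN_def)
  have key: "- (2 * K * Nu * sqrt (2 * \<epsilon>) + 2 * K * \<epsilon> * Nu) \<le> Q u"
    if \<epsilon>: "0 < \<epsilon>" "\<epsilon> < 1" for \<epsilon>
  proof -
    define e where "e = arccos (1 - \<epsilon>)"
    have e: "0 < e" unfolding e_def using arccos_less_arccos[of "1 - \<epsilon>" 1] \<epsilon> by simp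
    obtain a where a: "a \<in> S" "fs_dist HV HW u a < e" using u e unfolding proj_closure_def by blast
    have a0: "a \<noteq> 0" and Qa: "0 \<le> Q a" using S[OF a(1)] by (auto simp: Q_def)
    define Na where "Na = NN HV HW a"
    have Na: "0 < Na" using NN_pos[OF HV HW a0] by (simp add: Na_def)
    define p where "p = sum_ip HV HW u a"
    define c where "c = cmod p / (sqrt Nu * sqrt Na)"
    have den: "0 < sqrt Nu * sqrt Na" using Nu Na by simp
    have c0: "0 \<le> c" unfolding c_def using den by simp
    have c1: "c \<le> 1" unfolding c_def using den sum_ip_cs[OF HV HW, of u a]
      by (simp add: Nu_def Na_def p_def)
    have fsd: "fs_dist HV HW u a = arccos c"
      by (simp add: fs_dist_def c_def p_def Re_sum_ip Nu_def Na_def)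
    have cgt: "1 - \<epsilon> < c"
    proof (rule ccontr)
      assume "\<not> 1 - \<epsilon> < c"
      hence "arccos (1 - \<epsilon>) \<le> arccos c" using c0 c1 \<epsilon> by (intro arccos_le_arccos) auto
      thus False using a(2) fsd e_def by simp
    qed
    have hp: "(cmod p)^2 = c^2 * Nu * Na"
      using den Nu Na unfolding c_def by (simp add: power2_eq_square field_simps)
    define lm where "lm = cnj p / of_real Na"
    define dx where "dx = fst u - lm *s fst a"
    define dy where "dy = snd u - lm *s snd a"
    define Nd where "Nd = hnormsq HV dx + hnormsq HW dy"
    have lp: "lm * p = of_real ((cmod p)^2 / Na)"
      unfolding lm_def using complex_norm_square[of p] by (simp add: mult.commute)
    have l2: "(cmod lm)^2 = (cmod p)^2 / Na^2"
      unfolding lm_def using Na by (simp add: norm_divide power_divide)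
    have "Nd = Nu - 2 * Re (lm * p) + (cmod lm)^2 * Na"
      unfolding Nd_def dx_def dy_def
      by (simp add: hnormsq_diff[OF HV] hnormsq_diff[OF HW] herm_scale_right hnormsq_scale
          Nu_def Na_def NN_def p_def sum_ip_def algebra_simps)
    also have "\<dots> = Nu - (cmod p)^2 / Na"
      unfolding lp l2 using Na by (simp add: power2_eq_square field_simps)
    also have "\<dots> = Nu * (1 - c^2)" using hp Na by (simp add: field_simps)
    finally have Nd_eq: "Nd = Nu * (1 - c^2)" .
    have "1 - c^2 \<le> 2 * \<epsilon>"
    proof -
      have "1 - c^2 = (1 - c) * (1 + c)" by (simp add: power2_eq_square algebra_simps)
      also have "\<dots> \<le> \<epsilon> * 2" using cgt c0 c1 \<epsilon> by (intro mult_mono) auto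
      finally show ?thesis by simp
    qed
    hence Nd_le: "Nd \<le> 2 * \<epsilon> * Nu" using Nd_eq Nu by (simp add: mult_left_mono mult.commute)
    have Nd0: "0 \<le> hnormsq HV dx" "0 \<le> hnormsq HW dy"
      using hnormsq_nonneg[OF HV] hnormsq_nonneg[OF HW] by auto
    have "Q (lm *s fst a, lm *s snd a) = (cmod lm)^2 * Q a"
      by (simp add: Q_def hnormsq_scale algebra_simps)
    hence Qw: "0 \<le> Q (lm *s fst a, lm *s snd a)" using Qa by simp
    have ex: "lm *s fst a = fst u - dx" "lm *s snd a = snd u - dy" by (simp_all add: dx_def dy_def)
    define rx where "rx = Re (herm HV (fst u) dx)"
    define ry where "ry = Re (herm HW (snd u) dy)"
    have Qw_eq: "Q (lm *s fst a, lm *s snd a) =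
        Q u - 2 * \<alpha> * rx + \<alpha> * hnormsq HV dx - 2 * \<beta> * ry + \<beta> * hnormsq HW dy"
      unfolding ex by (simp add: Q_def hnormsq_diff[OF HV] hnormsq_diff[OF HW] rx_def ry_def algebra_simps)
    have sNd: "sqrt Nd \<le> sqrt Nu * sqrt (2 * \<epsilon>)"
      using Nd_le by (simp add: real_sqrt_mult[symmetric] mult.commute)
    have "\<bar>rx\<bar> \<le> sqrt (hnormsq HV (fst u)) * sqrt (hnormsq HV dx)"
      unfolding rx_def using herm_cs'[OF HV] abs_Re_le_cmod order_trans by blast
    also have "\<dots> \<le> sqrt Nu * sqrt Nd"
      using hxu Nd0 by (intro mult_mono) (auto simp: Nd_def)
    finally have rx: "\<bar>rx\<bar> \<le> sqrt Nu * sqrt Nd" .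
    have "\<bar>ry\<bar> \<le> sqrt (hnormsq HW (snd u)) * sqrt (hnormsq HW dy)"
      unfolding ry_def using herm_cs'[OF HW] abs_Re_le_cmod order_trans by blast
    also have "\<dots> \<le> sqrt Nu * sqrt Nd"
      using hyu Nd0 by (intro mult_mono) (auto simp: Nd_def)
    finally have ry: "\<bar>ry\<bar> \<le> sqrt Nu * sqrt Nd" .
    have b1: "\<bar>2 * \<alpha> * rx\<bar> \<le> 2 * \<bar>\<alpha>\<bar> * (sqrt Nu * sqrt Nd)"
      using rx by (simp add: abs_mult mult_left_mono)
    have b2: "\<bar>2 * \<beta> * ry\<bar> \<le> 2 * \<bar>\<beta>\<bar> * (sqrt Nu * sqrt Nd)"
      using ry by (simp add: abs_mult mult_left_mono)
    have b3: "\<bar>\<alpha> * hnormsq HV dx\<bar> \<le> \<bar>\<alpha>\<bar> * Nd"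
      using Nd0 by (simp add: abs_mult mult_left_mono Nd_def)
    have b4: "\<bar>\<beta> * hnormsq HW dy\<bar> \<le> \<bar>\<beta>\<bar> * Nd"
      using Nd0 by (simp add: abs_mult mult_left_mono Nd_def)
    have "- (2 * K * (sqrt Nu * sqrt Nd) + K * Nd) \<le> Q u"
      using Qw Qw_eq b1 b2 b3 b4 unfolding K_def by (simp add: algebra_simps abs_le_iff)
    moreover have "2 * K * (sqrt Nu * sqrt Nd) \<le> 2 * K * Nu * sqrt (2 * \<epsilon>)"
    proof -
      have "sqrt Nu * sqrt Nd \<le> sqrt Nu * (sqrt Nu * sqrt (2 * \<epsilon>))"
        using sNd Nu by (simp add: mult_left_mono)
      also have "\<dots> = Nu * sqrt (2 * \<epsilon>)" using Nu by (simp add: mult.assoc[symmetric])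
      finally show ?thesis using K0 by (simp add: mult_left_mono mult.assoc)
    qed
    moreover have "K * Nd \<le> 2 * K * \<epsilon> * Nu"
      using Nd_le K0 mult_left_mono[OF Nd_le K0] by (simp add: mult.assoc)
    ultimately show ?thesis by linarith
  qed
  show ?thesis
  proof (rule ccontr)
    assume "\<not> ?thesis"
    hence q: "0 < - Q u" by (simp add: Q_def)
    define t where "t = min (1/2) (- Q u / (4 * K * Nu + 1))"
    have "0 \<le> 4 * K * Nu" using Nu K0 by simp
    hence dpos: "0 < 4 * K * Nu + 1" by linarith
    have "0 < - Q u / (4 * K * Nu + 1)" using q dpos by (rule divide_pos_pos)
    hence t0a: "0 < t" unfolding t_def by (auto simp del: minus_divide_left)
    have t0b: "t \<le> 1/2" unfolding t_def by (rule min.cobounded1)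
    note t0 = t0a t0b
    have t1: "t * (4 * K * Nu + 1) \<le> - Q u"
      using dpos by (simp add: t_def min_le_iff_disj pos_le_divide_eq[symmetric])
    define \<epsilon> where "\<epsilon> = t^2 / 2"
    have tt: "t * t \<le> t" using t0 by (intro mult_right_le_one_le) auto
    have e1: "0 < \<epsilon>" using t0 by (simp add: \<epsilon>_def)
    have e2: "\<epsilon> < 1" using tt t0 unfolding \<epsilon>_def power2_eq_square by linarith
    note \<epsilon> = e1 e2
    have st: "sqrt (2 * \<epsilon>) = t" using t0 by (simp add: \<epsilon>_def)
    have "- (2 * K * Nu * t + 2 * K * \<epsilon> * Nu) \<le> Q u" using key[OF \<epsilon>] st by simp
    moreover have "2 * K * \<epsilon> * Nu \<le> 2 * K * Nu * t"
    proof -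
      have "\<epsilon> \<le> t" using t0 tt unfolding \<epsilon>_def power2_eq_square by linarith
      thus ?thesis using K0 Nu by (simp add: mult_left_mono mult_right_mono mult.commute mult.left_commute)
    qed
    moreover have "4 * K * Nu * t < - Q u" using t1 t0 by (simp add: algebra_simps)
    ultimately show False by linarith
  qed
qed




lemma matrix_inv_both:
  assumes "invertible (A::'a::semiring_1^'n^'m)"
  shows "A ** matrix_inv A = mat 1 \<and> matrix_inv A ** A = mat 1"
  using assms unfolding invertible_def matrix_inv_def by (rule someI_ex)

lemma cl_mat1: "classical_subgroup G \<Longrightarrow> mat 1 \<in> G"
  unfolding classical_subgroup_def GLc_def SLc_def SOc_def Spc_def
  by (auto simp: det_I transpose_mat matrix_mul_lid matrix_mul_rid)

lemma cl_inv:
  assumes "classical_subgroup G" "\<sigma> \<in> G"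
  shows "\<exists>\<sigma>'\<in>G. \<sigma>' ** \<sigma> = mat 1"
proof -
  have inv_det: "det (matrix_inv A) * det A = 1" if "det A \<noteq> 0" for A :: "complex^'a^'a"
  proof -
    have "invertible A" using that by (simp add: invertible_det_nz)
    hence "matrix_inv A ** A = mat 1" using matrix_inv_both by blast
    hence "det (matrix_inv A ** A) = 1" by (simp add: det_I)
    thus ?thesis by (simp add: det_mul)
  qed
  have linv: "matrix_inv A ** A = mat 1" if "det A \<noteq> 0" for A :: "complex^'a^'a"
    using that matrix_inv_both invertible_det_nz by blast
  have rinv: "A ** matrix_inv A = mat 1" if "det A \<noteq> 0" for A :: "complex^'a^'a"
    using that matrix_inv_both invertible_det_nz by blast
  from assms(1) consider "G = GLc" | "G = SLc" | "G = SOc"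
    | J where "transpose J = - J" "det J \<noteq> 0" "G = Spc J"
    unfolding classical_subgroup_def by blast
  thus ?thesis
  proof cases
    case 1
    hence d: "det \<sigma> \<noteq> 0" using assms(2) by (simp add: GLc_def)
    have "det (matrix_inv \<sigma>) \<noteq> 0" using inv_det[OF d] by auto
    thus ?thesis using 1 linv[OF d] by (auto simp: GLc_def)
  next
    case 2
    hence d: "det \<sigma> = 1" using assms(2) by (simp add: SLc_def)
    have "det (matrix_inv \<sigma>) = 1" using inv_det[of \<sigma>] d by auto
    thus ?thesis using 2 linv[of \<sigma>] d by (auto simp: SLc_def)
  next
    case 3
    hence o: "transpose \<sigma> ** \<sigma> = mat 1" and d: "det \<sigma> = 1" using assms(2) by (auto simp: SOc_def)
    have "\<sigma> ** transpose \<sigma> = mat 1" using matrix_left_right_inverse1[OF o] .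
    hence "transpose (transpose \<sigma>) ** transpose \<sigma> = mat 1" by (simp add: transpose_transpose)
    moreover have "det (transpose \<sigma>) = 1" using d by (simp add: det_transpose)
    ultimately show ?thesis using 3 o by (auto simp: SOc_def)
  next
    case (4 J)
    hence s: "transpose \<sigma> ** J ** \<sigma> = J" using assms(2) by (simp add: Spc_def)
    have "det J = det \<sigma> * det J * det \<sigma>"
      using arg_cong[OF s, of det] by (simp add: det_mul det_transpose)
    hence d: "det \<sigma> \<noteq> 0" using 4(2) by auto
    define \<sigma>' where "\<sigma>' = matrix_inv \<sigma>"
    have "transpose \<sigma>' ** J ** \<sigma>' = transpose \<sigma>' ** (transpose \<sigma> ** J ** \<sigma>) ** \<sigma>'"
      by (simp add: s)
    also have "\<dots> = transpose (\<sigma> ** \<sigma>') ** J ** (\<sigma> ** \<sigma>')"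
      by (simp add: matrix_transpose_mul matrix_mul_assoc)
    also have "\<dots> = J" using rinv[OF d] by (simp add: \<sigma>'_def transpose_mat matrix_mul_lid matrix_mul_rid)
    finally show ?thesis using 4 linv[OF d] by (auto simp: Spc_def \<sigma>'_def)
  qed
qed

lemma rep_nonzero:
  assumes "classical_subgroup G" "rational_rep G \<rho>" "\<sigma> \<in> G" "v \<noteq> 0"
  shows "\<rho> \<sigma> *v v \<noteq> 0"
proof
  assume z: "\<rho> \<sigma> *v v = 0"
  obtain \<sigma>' where s: "\<sigma>' \<in> G" "\<sigma>' ** \<sigma> = mat 1" using cl_inv[OF assms(1,3)] by blast
  have "\<rho> \<sigma>' ** \<rho> \<sigma> = mat 1"
    using assms(2) s assms(3) unfolding rational_rep_def by metis
  hence "v = (\<rho> \<sigma>' ** \<rho> \<sigma>) *v v" by (simp add: matrix_vector_mul_lid)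
  also have "\<dots> = 0" by (simp add: matrix_vector_mul_assoc[symmetric] z)
  finally show False using assms(4) by simp
qed



lemma arccos_arctan:
  assumes "0 \<le> s"
  shows "arccos (1 / sqrt (1 + s)) = arctan (sqrt s)"
proof -
  have "1 / sqrt (1 + s) = cos (arctan (sqrt s))" using assms by (simp add: cos_arctan)
  moreover have "0 \<le> arctan (sqrt s)" "arctan (sqrt s) \<le> pi"
    using assms arctan_ubound[of "sqrt s"] pi_gt_zero by (simp add: zero_le_arctan_iff, linarith)
  ultimately show ?thesis by (simp add: arccos_cos)
qed

lemma self_in_closure:
  assumes HV: "pos_def_hermitian HV" and HW: "pos_def_hermitian HW"
    and "a \<in> S" "a \<noteq> 0"
  shows "a \<in> proj_closure HV HW S"
proof -
  have N: "0 < NN HV HW a" using NN_pos[OF HV HW assms(4)] .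
  have "sum_ip HV HW a a = of_real (NN HV HW a)"
    by (simp add: sum_ip_def NN_def herm_real[OF HV] herm_real[OF HW])
  hence "fs_dist HV HW a a = 0"
    using N by (simp add: fs_dist_def Re_sum_ip)
  thus ?thesis using assms(3,4) unfolding proj_closure_def by force
qed

lemma fs_dist_pair:
  assumes HV: "pos_def_hermitian HV" and HW: "pos_def_hermitian HW"
    and x: "x \<noteq> 0"
  shows "fs_dist HV HW (x, y) (x, 0) = arctan (sqrt (hnormsq HW y / hnormsq HV x))"
proof -
  define hx where "hx = hnormsq HV x"
  define hy where "hy = hnormsq HW y"
  have hx: "0 < hx" using hnormsq_pos[OF HV x] by (simp add: hx_def)
  have hy: "0 \<le> hy" using hnormsq_nonneg[OF HW] by (simp add: hy_def)
  have "sum_ip HV HW (x, y) (x, 0) = of_real hx"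
    by (simp add: sum_ip_def herm_real[OF HV] hx_def)
  moreover have "Re (sum_ip HV HW (x, y) (x, y)) = hx + hy"
    by (simp add: Re_sum_ip NN_def hx_def hy_def)
  moreover have "Re (sum_ip HV HW (x, 0) (x, 0)) = hx"
    by (simp add: Re_sum_ip NN_def hx_def hnormsq_def)
  ultimately have "fs_dist HV HW (x, y) (x, 0) = arccos (hx / (sqrt (hx + hy) * sqrt hx))"
    using hx by (simp add: fs_dist_def)
  also have "hx / (sqrt (hx + hy) * sqrt hx) = 1 / sqrt (1 + hy / hx)"
  proof -
    have "1 + hy / hx = (hx + hy) / hx" using hx by (simp add: field_simps)
    hence e1: "sqrt (1 + hy / hx) = sqrt (hx + hy) / sqrt hx" by (simp add: real_sqrt_divide)
    have T: "0 < sqrt hx" using hx by simp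
    have "hx / (sqrt (hx + hy) * sqrt hx) = (sqrt hx * sqrt hx) / (sqrt (hx + hy) * sqrt hx)"
      using hx by (metis real_sqrt_mult_self abs_of_pos)
    also have "\<dots> = sqrt hx / sqrt (hx + hy)" using T by (simp only: mult_divide_mult_cancel_right)
    also have "\<dots> = 1 / (sqrt (hx + hy) / sqrt hx)" by simp
    finally show ?thesis using e1 by simp
  qed
  also have "arccos \<dots> = arctan (sqrt (hy / hx))" using hx hy by (simp add: arccos_arctan)
  finally show ?thesis by (simp add: hx_def hy_def)
qed

lemma fs_dist_lower:
  assumes HV: "pos_def_hermitian HV" and HW: "pos_def_hermitian HW"
    and r: "0 \<le> r"
    and a0: "a \<noteq> 0" and b0: "b \<noteq> 0"
    and ha: "r * hnormsq HV (fst a) \<le> hnormsq HW (snd a)"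
    and hb: "snd b = 0"
  shows "arctan (sqrt r) \<le> fs_dist HV HW a b"
proof -
  obtain x y where a: "a = (x, y)" by (cases a)
  obtain x' where b: "b = (x', 0)" using hb by (cases b) auto
  have x': "x' \<noteq> 0" using b0 b by (simp add: zero_prod_def)
  define hx where "hx = hnormsq HV x"
  define hx' where "hx' = hnormsq HV x'"
  define Na where "Na = NN HV HW a"
  have hx: "0 \<le> hx" using hnormsq_nonneg[OF HV] by (simp add: hx_def)
  have hx'p: "0 < hx'" using hnormsq_pos[OF HV x'] by (simp add: hx'_def)
  have Na: "0 < Na" using NN_pos[OF HV HW a0] by (simp add: Na_def)
  have Na_ge: "(1 + r) * hx \<le> Na" using ha by (simp add: Na_def NN_def a hx_def algebra_simps)
  define p where "p = sum_ip HV HW a b"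
  have p: "p = herm HV x x'" by (simp add: p_def sum_ip_def a b)
  have pb: "cmod p \<le> sqrt hx * sqrt hx'" unfolding p hx_def hx'_def by (rule herm_cs'[OF HV])
  have Nb: "NN HV HW b = hx'" by (simp add: NN_def b hx'_def hnormsq_def)
  define c where "c = cmod p / (sqrt Na * sqrt hx')"
  have fsd: "fs_dist HV HW a b = arccos c"
    by (simp add: fs_dist_def c_def p_def Nb Re_sum_ip Na_def)
  have den: "0 < sqrt Na * sqrt hx'" using Na hx'p by simp
  have c0: "0 \<le> c" unfolding c_def using den by simp
  have "c \<le> sqrt hx * sqrt hx' / (sqrt Na * sqrt hx')"
    unfolding c_def using divide_right_mono[OF pb less_imp_le[OF den]] .
  also have "\<dots> = sqrt hx / sqrt Na" using hx'p by simp
  also have "\<dots> \<le> 1 / sqrt (1 + r)"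
  proof -
    have "sqrt ((1 + r) * hx) \<le> sqrt Na" using Na_ge by simp
    hence "sqrt (1 + r) * sqrt hx \<le> sqrt Na" by (simp add: real_sqrt_mult)
    moreover have "0 < sqrt (1 + r)" using r by simp
    ultimately show ?thesis using Na by (simp add: field_simps)
  qed
  finally have c1: "c \<le> 1 / sqrt (1 + r)" .
  have "1 / sqrt (1 + r) \<le> 1" using r by simp
  hence "arccos (1 / sqrt (1 + r)) \<le> arccos c"
    using c0 c1 by (intro arccos_le_arccos) auto
  thus ?thesis using fsd arccos_arctan[OF r] by simp
qed




theorem corollary4p4:
  fixes G :: "(complex^'k^'k) set"
    and \<rho> :: "complex^'k^'k \<Rightarrow> complex^'n^'n"
    and \<tau> :: "complex^'k^'k \<Rightarrow> complex^'m^'m"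
    and HV :: "complex^'n^'n" and HW :: "complex^'m^'m"
    and v :: "complex^'n" and w :: "complex^'m"
  assumes "classical_subgroup G"
    and "rational_rep G \<rho>" and "rational_rep G \<tau>"
    and "pos_def_hermitian HV" and "pos_def_hermitian HW"
    and "v \<noteq> 0" and "w \<noteq> 0"
  shows "(INF \<sigma>\<in>G. ereal (ln (hnormsq HW (\<tau> \<sigma> *v w)) - ln (hnormsq HV (\<rho> \<sigma> *v v))))
         = elog ((tan (fs_setdist HV HW
                          (proj_closure HV HW (orbit_pair G \<rho> \<tau> v w))
                          (proj_closure HV HW (orbit_pair G \<rho> \<tau> v 0)))) ^ 2)"
proof -
  note HV = assms(4) and HW = assms(5)
  define hk where "hk \<sigma> = hnormsq HV (\<rho> \<sigma> *v v)" for \<sigma>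
  define hw where "hw \<sigma> = hnormsq HW (\<tau> \<sigma> *v w)" for \<sigma>
  define s where "s \<sigma> = hw \<sigma> / hk \<sigma>" for \<sigma>
  define r where "r = Inf (s ` G)"
  have G1: "mat 1 \<in> G" using cl_mat1[OF assms(1)] .
  hence Gne: "G \<noteq> {}" by blast
  have nzv: "\<rho> \<sigma> *v v \<noteq> 0" if "\<sigma> \<in> G" for \<sigma>
    using rep_nonzero[OF assms(1) assms(2) that assms(6)] .
  have nzw: "\<tau> \<sigma> *v w \<noteq> 0" if "\<sigma> \<in> G" for \<sigma>
    using rep_nonzero[OF assms(1) assms(3) that assms(7)] .
  have hkp: "0 < hk \<sigma>" if "\<sigma> \<in> G" for \<sigma>
    unfolding hk_def using hnormsq_pos[OF HV nzv[OF that]] .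
  have hwp: "0 < hw \<sigma>" if "\<sigma> \<in> G" for \<sigma>
    unfolding hw_def using hnormsq_pos[OF HW nzw[OF that]] .
  have sp: "0 < s \<sigma>" if "\<sigma> \<in> G" for \<sigma>
    unfolding s_def using hkp[OF that] hwp[OF that] by simp
  have bdd: "bdd_below (s ` G)"
    by (rule bdd_belowI[of _ 0]) (auto dest: sp intro: less_imp_le)
  have r0: "0 \<le> r" unfolding r_def
    by (rule cINF_greatest[OF Gne]) (auto dest: sp intro: less_imp_le)
  have rle: "r \<le> s \<sigma>" if "\<sigma> \<in> G" for \<sigma>
    unfolding r_def by (rule cINF_lower[OF bdd that])
  define A where "A = orbit_pair G \<rho> \<tau> v w"
  define B where "B = orbit_pair G \<rho> \<tau> v 0"
  have clA: "r * hnormsq HV (fst u) \<le> hnormsq HW (snd u)" if "u \<in> proj_closure HV HW A" for u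
  proof -
    have "0 \<le> (- r) * hnormsq HV (fst u) + 1 * hnormsq HW (snd u)"
    proof (rule closure_quad[OF HV HW that])
      fix a assume "a \<in> A"
      then obtain \<sigma> where \<sigma>: "\<sigma> \<in> G" "a = (\<rho> \<sigma> *v v, \<tau> \<sigma> *v w)"
        unfolding A_def orbit_pair_def by blast
      have "r * hk \<sigma> \<le> hw \<sigma>" using rle[OF \<sigma>(1)] hkp[OF \<sigma>(1)]
        by (simp add: s_def pos_le_divide_eq)
      moreover have "a \<noteq> 0" using nzv[OF \<sigma>(1)] \<sigma>(2) by (auto simp: zero_prod_def)
      ultimately show "a \<noteq> 0 \<and> 0 \<le> - r * hnormsq HV (fst a) + 1 * hnormsq HW (snd a)"
        using \<sigma>(2) by (simp add: hk_def hw_def)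
    qed
    thus ?thesis by simp
  qed
  have clB: "snd u = 0" if "u \<in> proj_closure HV HW B" for u
  proof -
    have "0 \<le> 0 * hnormsq HV (fst u) + (-1) * hnormsq HW (snd u)"
    proof (rule closure_quad[OF HV HW that])
      fix a assume "a \<in> B"
      then obtain \<sigma> where \<sigma>: "\<sigma> \<in> G" "a = (\<rho> \<sigma> *v v, \<tau> \<sigma> *v 0)"
        unfolding B_def orbit_pair_def by blast
      hence "a = (\<rho> \<sigma> *v v, 0)" by simp
      moreover have "a \<noteq> 0" using nzv[OF \<sigma>(1)] \<sigma>(2) by (auto simp: zero_prod_def)
      ultimately show "a \<noteq> 0 \<and> 0 \<le> 0 * hnormsq HV (fst a) + (-1) * hnormsq HW (snd a)"
        by (simp add: hnormsq_def)
    qed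
    hence "hnormsq HW (snd u) = 0" using hnormsq_nonneg[OF HW, of "snd u"] by simp
    thus ?thesis using hnormsq_zero_iff[OF HW] by blast
  qed
  define T where "T = {fs_dist HV HW a b | a b. a \<in> proj_closure HV HW A \<and> b \<in> proj_closure HV HW B}"
  define D where "D = fs_setdist HV HW (proj_closure HV HW A) (proj_closure HV HW B)"
  have DT: "D = Inf T" by (simp add: D_def T_def fs_setdist_def)
  have aT: "arctan (sqrt (s \<sigma>)) \<in> T" if "\<sigma> \<in> G" for \<sigma>
  proof -
    have a: "(\<rho> \<sigma> *v v, \<tau> \<sigma> *v w) \<in> proj_closure HV HW A"
      using that nzv[OF that] by (intro self_in_closure[OF HV HW]) (auto simp: A_def orbit_pair_def zero_prod_def)
    have b: "(\<rho> \<sigma> *v v, 0) \<in> proj_closure HV HW B"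
    proof (intro self_in_closure[OF HV HW])
      show "(\<rho> \<sigma> *v v, 0) \<in> B" unfolding B_def orbit_pair_def using that
        by (auto intro!: exI[of _ \<sigma>])
    qed (use nzv[OF that] in \<open>auto simp: zero_prod_def\<close>)
    have "fs_dist HV HW (\<rho> \<sigma> *v v, \<tau> \<sigma> *v w) (\<rho> \<sigma> *v v, 0) = arctan (sqrt (s \<sigma>))"
      using fs_dist_pair[OF HV HW nzv[OF that]] by (simp add: s_def hk_def hw_def)
    thus ?thesis using a b unfolding T_def by force
  qed
  have Tne: "T \<noteq> {}" using aT[OF G1] by blast
  have Tlb: "arctan (sqrt r) \<le> t" if tT: "t \<in> T" for t
  proof -
    obtain a b where ab: "t = fs_dist HV HW a b" "a \<in> proj_closure HV HW A" "b \<in> proj_closure HV HW B"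
      using tT unfolding T_def by blast
    show ?thesis unfolding ab(1)
      by (rule fs_dist_lower[OF HV HW r0]) (use ab clA clB in \<open>auto simp: proj_closure_def\<close>)
  qed
  have bddT: "bdd_below T" by (rule bdd_belowI[of _ "arctan (sqrt r)"]) (rule Tlb)
  have D_ge: "arctan (sqrt r) \<le> D" unfolding DT by (rule cInf_greatest[OF Tne Tlb])
  have D_le: "D \<le> arctan (sqrt (s \<sigma>))" if "\<sigma> \<in> G" for \<sigma>
    unfolding DT by (rule cInf_lower[OF aT[OF that] bddT])
  have D0: "0 \<le> D" using D_ge r0 by (meson order_trans zero_le_arctan_iff real_sqrt_ge_zero)
  have Dpi: "D < pi / 2" using D_le[OF G1] arctan_ubound[of "sqrt (s (mat 1))"] by linarith
  have tan_ge: "sqrt r \<le> tan D"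
    using tan_mono_le[OF _ D_ge Dpi] arctan_bounded[of "sqrt r"] by (simp add: tan_arctan)
  have tan_le: "tan D \<le> sqrt (s \<sigma>)" if "\<sigma> \<in> G" for \<sigma>
    using tan_mono_le[of D "arctan (sqrt (s \<sigma>))"] D_le[OF that] D0 arctan_bounded[of "sqrt (s \<sigma>)"]
    by (simp add: tan_arctan)
  have tan0: "0 \<le> tan D" using tan_ge r0 by (meson order_trans real_sqrt_ge_zero)
  have tan2: "(tan D)^2 = r"
  proof (rule antisym)
    show "(tan D)^2 \<le> r" unfolding r_def
    proof (rule cINF_greatest[OF Gne])
      fix \<sigma> assume "\<sigma> \<in> G"
      hence "(tan D)^2 \<le> (sqrt (s \<sigma>))^2" using tan_le tan0 by (intro power_mono) auto
      thus "(tan D)^2 \<le> s \<sigma>" using sp[OF \<open>\<sigma> \<in> G\<close>] by simp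
    qed
    have "(sqrt r)^2 \<le> (tan D)^2" using tan_ge r0 by (intro power_mono) auto
    thus "r \<le> (tan D)^2" using r0 by simp
  qed
  have L: "(INF \<sigma>\<in>G. ereal (ln (hnormsq HW (\<tau> \<sigma> *v w)) - ln (hnormsq HV (\<rho> \<sigma> *v v))))
      = (INF \<sigma>\<in>G. ereal (ln (s \<sigma>)))"
  proof (rule INF_cong[OF refl])
    fix \<sigma> assume "\<sigma> \<in> G"
    thus "ereal (ln (hnormsq HW (\<tau> \<sigma> *v w)) - ln (hnormsq HV (\<rho> \<sigma> *v v))) = ereal (ln (s \<sigma>))"
      using hkp[OF \<open>\<sigma> \<in> G\<close>] hwp[OF \<open>\<sigma> \<in> G\<close>] by (simp add: s_def ln_div hk_def hw_def)
  qed
  have upper: "(INF \<sigma>\<in>G. ereal (ln (s \<sigma>))) \<le> ereal y" if "r < exp y" for y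
  proof -
    have "Inf (s ` G) < exp y" using that by (simp add: r_def)
    hence "\<exists>\<sigma>\<in>G. s \<sigma> < exp y" by (simp only: cINF_less_iff[OF Gne bdd])
    then obtain \<sigma> where \<sigma>: "\<sigma> \<in> G" "s \<sigma> < exp y" by blast
    have "ln (s \<sigma>) < y" using \<sigma> sp[OF \<sigma>(1)] by (metis ln_exp ln_less_cancel_iff exp_gt_zero)
    hence le: "ereal (ln (s \<sigma>)) \<le> ereal y" by simp
    have "(INF \<sigma>\<in>G. ereal (ln (s \<sigma>))) \<le> ereal (ln (s \<sigma>))" by (rule INF_lower[OF \<sigma>(1)])
    thus ?thesis using le by (rule order_trans)
  qed
  have M: "(INF \<sigma>\<in>G. ereal (ln (s \<sigma>))) = elog r"
  proof (cases "r = 0")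
    case True
    have "(INF \<sigma>\<in>G. ereal (ln (s \<sigma>))) = - \<infinity>"
      by (rule ereal_bot, rule upper) (simp add: True)
    thus ?thesis by (simp add: elog_def True)
  next
    case False
    hence rp: "0 < r" using r0 by simp
    have "(INF \<sigma>\<in>G. ereal (ln (s \<sigma>))) = ereal (ln r)"
    proof (rule antisym)
      show "(INF \<sigma>\<in>G. ereal (ln (s \<sigma>))) \<le> ereal (ln r)"
      proof (rule ereal_le_epsilon2)
        fix e :: real assume "0 < e"
        have "r < exp (ln r + e)" using rp \<open>0 < e\<close> by (simp add: exp_add)
        thus "(INF \<sigma>\<in>G. ereal (ln (s \<sigma>))) \<le> ereal (ln r) + ereal e" using upper by simp
      qed
      show "ereal (ln r) \<le> (INF \<sigma>\<in>G. ereal (ln (s \<sigma>)))"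
      proof (rule INF_greatest)
        fix \<sigma> assume "\<sigma> \<in> G"
        thus "ereal (ln r) \<le> ereal (ln (s \<sigma>))" using rle sp rp by simp
      qed
    qed
    thus ?thesis using rp by (simp add: elog_def)
  qed
  show ?thesis using L M tan2 by (simp add: D_def A_def B_def)
qed


end
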